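(* Let $N\ge1$, $R>0$, and for $i=1,\dots,N$ let $D_i>0$, $b_i>0$, $a_i\in\mathbb{R}$. Let $c_i(q):=-\dfrac{a_i}{b_i}-\dfrac{1}{b_i}\big[\ln(1-q)-\ln q\big]$ for $q\in(0,1)$, and for $\bm q\in(0,1)^N$ define $$g'(\bm q):=\sum_{i=1}^N\big(R D_i q_i c_i(q_i)-D_i q_i\big).$$ For $\lambda\in(0,\infty)$ define $$q_i(\lambda):=\frac{W\big(\exp(a_i+\frac{b_i}{\lambda R}+\frac{b_i}{R}-1)\big)}{W\big(\exp(a_i+\frac{b_i}{\lambda R}+\frac{b_i}{R}-1)\big)+1},\qquad g'(\lambda):=g'\big(q_1(\lambda),\dots,q_N(\lambda)\big).$$ Then $g'(\bm q)$ is strongly convex on $(0,1)^N$; $g'(\lambda)$ is strictly decreasing on $(0,\infty)$; and $\lim_{\lambda\to0^+}g'(\lambda)>0$.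
   Context: $W$ denotes the Lambert $W$ function on $(0,\infty)$: the inverse of $x\mapsto xe^x$ on $(0,\infty)$. $R$ is a lower bound on return on investment; $g'$ is the ROI-constraint function. *)

theory Defs
  imports "HOL-Analysis.Analysis"
begin

definition lambertW :: "real \<Rightarrow> real" where
  "lambertW y = (THE x. 0 < x \<and> x * exp x = y)"

definition strongly_convex_on :: "'a::real_normed_vector set \<Rightarrow> ('a \<Rightarrow> real) \<Rightarrow> bool" where
  "strongly_convex_on S f \<longleftrightarrow> convex S \<and> (\<exists>m>0. \<forall>x\<in>S. \<forall>y\<in>S. \<forall>t\<in>{0..1}.
     f (t *\<^sub>R x + (1 - t) *\<^sub>R y) \<le> t * f x + (1 - t) * f y - m / 2 * t * (1 - t) * (norm (x - y))\<^sup>2)"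

definition cfun :: "real \<Rightarrow> real \<Rightarrow> real \<Rightarrow> real" where
  "cfun a b q = - a / b - (1 / b) * (ln (1 - q) - ln q)"

definition gq :: "real \<Rightarrow> real^'n \<Rightarrow> real^'n \<Rightarrow> real^'n \<Rightarrow> real^'n \<Rightarrow> real" where
  "gq R D a b q = (\<Sum>i\<in>UNIV. R * D$i * q$i * cfun (a$i) (b$i) (q$i) - D$i * q$i)"

definition qlam :: "real \<Rightarrow> real \<Rightarrow> real \<Rightarrow> real \<Rightarrow> real" where
  "qlam R a b lam = (let w = lambertW (exp (a + b / (lam * R) + b / R - 1)) in w / (w + 1))"

definition glam :: "real \<Rightarrow> real^'n \<Rightarrow> real^'n \<Rightarrow> real^'n \<Rightarrow> real \<Rightarrow> real" where
  "glam R D a b lam = gq R D a b (\<chi> i. qlam R (a$i) (b$i) lam)"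

end

theory Submission imports Defs "HOL-Real_Asymp.Real_Asymp" begin

lemma lambertW_ex: assumes "y > (0::real)" shows "\<exists>!x. 0 < x \<and> x * exp x = y"
proof -
  have "\<exists>x\<ge>0. x \<le> y \<and> x * exp x = y"
  proof (rule IVT)
    show "0 * exp 0 \<le> y" using assms by simp
    show "y \<le> y * exp y" using assms by simp
    show "0 \<le> y" using assms by simp
    show "\<forall>x. 0 \<le> x \<and> x \<le> y \<longrightarrow> isCont (\<lambda>x. x * exp x) x" by (auto intro!: continuous_intros)
  qed
  then obtain x where x: "x \<ge> 0" "x * exp x = y" by blast
  have "x > 0" using x assms by (cases "x = 0") auto
  moreover have "x' = x" if "0 < x'" "x' * exp x' = y" for x'
  proof (rule ccontr)
    assume "x' \<noteq> x"
    then consider "x' < x" | "x < x'" by linarith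
    then show False
    proof cases
      case 1
      then have "x' * exp x' < x * exp x" using that \<open>x>0\<close>
        by (intro mult_strict_mono) auto
      then show False using that x by simp
    next
      case 2
      then have "x * exp x < x' * exp x'" using that \<open>x>0\<close>
        by (intro mult_strict_mono) auto
      then show False using that x by simp
    qed
  qed
  ultimately show ?thesis using x by blast
qed

lemma W_props: "0 < lambertW (exp z) \<and> ln (lambertW (exp z)) + lambertW (exp z) = z"
proof -
  have "0 < lambertW (exp z) \<and> lambertW (exp z) * exp (lambertW (exp z)) = exp z"
    unfolding lambertW_def by (rule theI') (rule lambertW_ex, simp)
  moreover have "ln (w * exp w) = ln w + w" if "w > 0" for w :: real using that by (simp add: ln_mult)
  ultimately show ?thesis by (metis ln_exp)
qed

lemma ln_w_mono: fixes x y :: real assumes "0 < x" "x < y" shows "ln x + x < ln y + y"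
proof -
  have "ln x < ln y" using assms by simp
  then show ?thesis using assms by linarith
qed

lemma W_strict_mono: assumes "z1 < z2" shows "lambertW (exp z1) < lambertW (exp z2)"
  using W_props[of z1] W_props[of z2] assms ln_w_mono
  by (smt (verit))

definition psi :: "real \<Rightarrow> real \<Rightarrow> real \<Rightarrow> real \<Rightarrow> real \<Rightarrow> real" where
  "psi R D a b w = D * (w / (1 + w)) * ((R / b) * (ln w - a) - 1)"

lemma term_eq: assumes "w > 0" "b > 0"
  shows "R * D * (w/(w+1)) * cfun a b (w/(w+1)) - D * (w/(w+1)) = psi R D a b w"
proof -
  have "1 - w/(w+1) = 1/(w+1)" using assms by (simp add: field_simps)
  then have "ln (1 - w/(w+1)) - ln (w/(w+1)) = - ln w" using assms
    by (simp add: ln_div)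
  then have c: "cfun a b (w/(w+1)) = (ln w - a) / b" unfolding cfun_def by (simp add: diff_divide_distrib)
  moreover have "b + b * w \<noteq> 0" "1 + w \<noteq> 0" using assms by (smt (verit) mult_pos_pos)+
  moreover have "b \<noteq> 0" using assms by simp
  moreover have g: "R*D*q*((l - a)/b) - D*q = D*q*((R/b)*(l - a) - 1)" if "b \<noteq> 0" for q l :: real
    using that by (simp add: field_simps)
  ultimately show ?thesis unfolding psi_def c g[OF \<open>b \<noteq> 0\<close>] by (simp add: add.commute[of w 1])
qed

lemma psi_deriv: assumes "w > 0" "b > 0" "R > 0"
  shows "(psi R D a b has_real_derivative (D*(R/b)/(1+w)^2 * (ln w + w + 1 - a - b/R))) (at w)"
proof -
  have p: "b + b * w > 0" "1 + w > 0" using assms by (auto intro: add_pos_pos)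
  have "(psi R D a b has_real_derivative
     D * ((1 / (1+w)^2) * ((R / b) * (ln w - a) - 1) + (w/(1+w)) * ((R/b) * (1/w)))) (at w)"
    unfolding psi_def using assms p
    apply (auto intro!: derivative_eq_intros)
    apply (simp add: divide_simps power2_eq_square)
    apply (simp add: algebra_simps)
    done
  moreover have "D * ((1 / (1+w)^2) * ((R / b) * (ln w - a) - 1) + (w/(1+w)) * ((R/b) * (1/w)))
     = D*(R/b)/(1+w)^2 * (ln w + w + 1 - a - b/R)"
  proof -
    have "(1+w)^2 > 0" using p by simp
    then show ?thesis using assms p by (simp add: divide_simps) (simp add: algebra_simps power2_eq_square)
  qed
  ultimately show ?thesis by simp
qed


definition zz :: "real \<Rightarrow> real \<Rightarrow> real \<Rightarrow> real \<Rightarrow> real" where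
  "zz R a b lam = a + b / (lam * R) + b / R - 1"

lemma term_qlam: assumes "b > 0"
  shows "R*D*qlam R a b lam * cfun a b (qlam R a b lam) - D*qlam R a b lam = psi R D a b (lambertW (exp (zz R a b lam)))"
  unfolding qlam_def Let_def zz_def by (rule term_eq) (auto simp: W_props assms)

lemma glam_eq: assumes "\<forall>i. b$i > 0"
  shows "glam R D a b lam = (\<Sum>i\<in>UNIV. psi R (D$i) (a$i) (b$i) (lambertW (exp (zz R (a$i) (b$i) lam))))"
  unfolding glam_def gq_def vec_lambda_beta using term_qlam assms by simp

lemma psi_path_mono:
  assumes "R > 0" "b > 0" "D > 0" "0 < l1" "l1 < l2"
  shows "psi R D a b (lambertW (exp (zz R a b l2))) < psi R D a b (lambertW (exp (zz R a b l1)))"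
proof -
  have "b / (l2 * R) < b / (l1 * R)" using assms
    by (intro divide_strict_left_mono) auto
  then have z: "zz R a b l2 < zz R a b l1" unfolding zz_def by simp
  define w1 where "w1 = lambertW (exp (zz R a b l1))"
  define w2 where "w2 = lambertW (exp (zz R a b l2))"
  have w12: "w2 < w1" unfolding w1_def w2_def by (rule W_strict_mono[OF z])
  have w2p: "w2 > 0" and w2e: "ln w2 + w2 = zz R a b l2" unfolding w2_def using W_props by auto
  have "b / (l2 * R) > 0" using assms by simp
  then have zgt: "zz R a b l2 > a + b/R - 1" unfolding zz_def by simp
  show ?thesis unfolding w1_def[symmetric] w2_def[symmetric]
  proof (rule DERIV_pos_imp_increasing[OF w12])
    fix x assume x: "w2 \<le> x" "x \<le> w1"
    have "ln w2 \<le> ln x" using x w2p by simp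
    then have "ln x + x + 1 - a - b/R > 0" using x zgt w2e by linarith
    moreover have "D*(R/b)/(1+x)^2 > 0" using assms x w2p by simp
    ultimately show "\<exists>y. DERIV (psi R D a b) x :> y \<and> y > 0"
      using psi_deriv[of x b R D a] x w2p assms by (intro exI[of _ "D*(R/b)/(1+x)^2 * (ln x + x + 1 - a - b/R)"] conjI) auto
  qed
qed

lemma zz_lim: assumes "R > 0" "b > 0"
  shows "filterlim (zz R a b) at_top (at_right 0)"
proof -
  have "filterlim (\<lambda>l. (a + b/R - 1) + (b/R) * inverse l) at_top (at_right 0)"
    using assms
    by (intro filterlim_tendsto_add_at_top[OF tendsto_const] filterlim_tendsto_pos_mult_at_top[OF tendsto_const]
        filterlim_inverse_at_top_right) auto
  moreover have "(\<lambda>l. (a + b/R - 1) + (b/R) * inverse l) = zz R a b"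
    unfolding zz_def by (auto simp: field_simps)
  ultimately show ?thesis by simp
qed

lemma W_lim: "filterlim (\<lambda>z. lambertW (exp z)) at_top at_top"
  unfolding filterlim_at_top
proof
  fix Z :: real
  show "eventually (\<lambda>z. Z \<le> lambertW (exp z)) at_top"
    using eventually_ge_at_top[of "2*Z"]
  proof (rule eventually_mono)
    fix z :: real assume "2*Z \<le> z"
    moreover have "ln (lambertW (exp z)) \<le> lambertW (exp z) - 1"
      using W_props[of z] by (intro ln_le_minus_one) auto
    ultimately show "Z \<le> lambertW (exp z)" using W_props[of z] by linarith
  qed
qed

lemma psi_lim: assumes "R > 0" "b > 0" "D > 0"
  shows "filterlim (psi R D a b) at_top at_top"
proof -
  have t: "((\<lambda>w::real. w / (1 + w)) \<longlongrightarrow> 1) at_top" by real_asymp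
  have l: "filterlim (\<lambda>w. (-a) + ln w) at_top at_top"
    by (rule filterlim_tendsto_add_at_top[OF tendsto_const ln_at_top])
  have l2: "filterlim (\<lambda>w. (-1) + (R/b) * ((-a) + ln w)) at_top at_top"
    using assms by (intro filterlim_tendsto_add_at_top[OF tendsto_const] filterlim_tendsto_pos_mult_at_top[OF tendsto_const _ l]) auto
  have "filterlim (\<lambda>w. (D * (w / (1 + w))) * ((-1) + (R/b) * ((-a) + ln w))) at_top at_top"
    using assms
    by (intro filterlim_tendsto_pos_mult_at_top[OF tendsto_mult_left[OF t] _ l2]) auto
  moreover have "(\<lambda>w. (D * (w / (1 + w))) * ((-1) + (R/b) * ((-a) + ln w))) = psi R D a b"
    unfolding psi_def by (auto simp: algebra_simps)
  ultimately show ?thesis by simp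
qed

lemma sum_at_top:
  fixes f :: "'n::finite \<Rightarrow> 'a \<Rightarrow> real"
  assumes "\<And>i. filterlim (f i) at_top F"
  shows "filterlim (\<lambda>x. \<Sum>i\<in>UNIV. f i x) at_top F"
  unfolding filterlim_at_top
proof
  fix Z :: real
  have "eventually (\<lambda>x. \<forall>i. \<bar>Z\<bar> \<le> f i x) F"
    using assms by (intro eventually_all_finite) (simp add: filterlim_at_top)
  then show "eventually (\<lambda>x. Z \<le> (\<Sum>i\<in>UNIV. f i x)) F"
  proof (rule eventually_mono)
    fix x assume h: "\<forall>i. \<bar>Z\<bar> \<le> f i x"
    have "(\<Sum>i\<in>(UNIV::'n set). \<bar>Z\<bar>) \<le> (\<Sum>i\<in>UNIV. f i x)" using h by (intro sum_mono) auto
    moreover have "(\<Sum>i\<in>(UNIV::'n set). \<bar>Z\<bar>) = real CARD('n) * \<bar>Z\<bar>" by simp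
    moreover have "real CARD('n) \<ge> 1" by simp
    moreover have "real CARD('n) * \<bar>Z\<bar> \<ge> \<bar>Z\<bar>" using calculation(3)
      by (metis abs_ge_zero mult_1 mult_right_mono)
    ultimately show "Z \<le> (\<Sum>i\<in>UNIV. f i x)" by linarith
  qed
qed


definition kf :: "real \<Rightarrow> real" where "kf q = q * (ln q - ln (1 - q))"

lemma phi_convex: "convex_on {0<..<1} (\<lambda>q. kf q - q^2/2)"
proof (rule convex_on_realI[where f' = "\<lambda>x. ln x - ln (1 - x) + 1 + x*x/(1-x)"])
  show "connected {0<..<1::real}" by simp
next
  fix x :: real assume x: "x \<in> {0<..<1}"
  then have "((\<lambda>q. kf q - q^2/2) has_real_derivative
      (ln x - ln (1 - x)) + x * (1/x - (-1)/(1-x)) - x) (at x)"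
    unfolding kf_def by (auto intro!: derivative_eq_intros)
  moreover have "(ln x - ln (1 - x)) + x * (1/x - (-1)/(1-x)) - x = ln x - ln (1 - x) + 1 + x*x/(1-x)"
    using x by (simp add: field_simps)
  ultimately show "((\<lambda>q. kf q - q^2/2) has_real_derivative ln x - ln (1 - x) + 1 + x*x/(1-x)) (at x)"
    by (rule DERIV_cong)
next
  fix x y :: real assume xy: "x \<in> {0<..<1}" "y \<in> {0<..<1}" "x \<le> y"
  have "ln x \<le> ln y" using xy by simp
  moreover have "ln (1 - y) \<le> ln (1 - x)" using xy by simp
  moreover have "x*x/(1-x) \<le> y*y/(1-y)" using xy
    by (intro frac_le mult_mono) auto
  ultimately show "ln x - ln (1 - x) + 1 + x*x/(1-x) \<le> ln y - ln (1 - y) + 1 + y*y/(1-y)" by linarith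
qed

lemma kf_sc: assumes "x \<in> {0<..<1}" "y \<in> {0<..<1}" "0 \<le> t" "t \<le> 1"
  shows "kf (t*x + (1-t)*y) \<le> t * kf x + (1-t) * kf y - 1/2 * t * (1-t) * (x-y)^2"
proof -
  define M where "M = t*x + (1-t)*y"
  have "(1-t)*y + t*x = M" unfolding M_def by simp
  then have A: "kf M - M^2/2 \<le> (1-t) * (kf y - y^2/2) + t * (kf x - x^2/2)"
    using convex_onD[OF phi_convex, of t y x] assms by simp
  have B: "t*x^2 + (1-t)*y^2 - M^2 = t*(1-t)*(x-y)^2"
    unfolding M_def by (simp add: algebra_simps power2_eq_square)
  have C: "(1-t) * (kf y - y^2/2) + t * (kf x - x^2/2) = t * kf x + (1-t) * kf y - (t*x^2 + (1-t)*y^2)/2"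
    by (simp add: field_simps)
  have E: "1/2 * t * (1-t) * (x-y)^2 = (t*(1-t)*(x-y)^2)/2" by simp
  have H: "kM \<le> T - (p - m)/2" if "kM - m/2 \<le> S" "S = T - p/2" for kM m S T p :: real using that by (simp add: field_simps)
  show ?thesis unfolding M_def[symmetric] E B[symmetric] by (rule H[OF A C])
qed

lemma h_eq: "R*D*q*cfun a b q - D*q = (-R*D*a/b - D)*q + (R*D/b) * kf q"
  unfolding cfun_def kf_def by (simp add: algebra_simps diff_divide_distrib)

lemma h_sc: assumes "x \<in> {0<..<1}" "y \<in> {0<..<1}" "0 \<le> t" "t \<le> 1" "R > 0" "D > 0" "b > 0"
  shows "R*D*(t*x + (1-t)*y)*cfun a b (t*x + (1-t)*y) - D*(t*x + (1-t)*y)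
     \<le> t * (R*D*x*cfun a b x - D*x) + (1-t) * (R*D*y*cfun a b y - D*y)
        - (R*D/b)/2 * t * (1-t) * (x-y)^2"
proof -
  have H: "L + A \<le> X1 + X2 - Q" if "A \<le> B" "L = l1 + l2" "B = u1 + u2 - Q" "X1 = l1 + u1" "X2 = l2 + u2"
    for A B L l1 l2 u1 u2 Q X1 X2 :: real using that by linarith
  have "(R*D/b) * kf (t*x + (1-t)*y) \<le> (R*D/b) * (t * kf x + (1-t) * kf y - 1/2 * t * (1-t) * (x-y)^2)"
    using kf_sc[OF assms(1-4)] assms by (intro mult_left_mono) auto
  moreover have "(-R*D*a/b - D)*(t*x + (1-t)*y) = t*((-R*D*a/b - D)*x) + (1-t)*((-R*D*a/b - D)*y)"
    using assms by (simp add: field_simps)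
  moreover have "(R*D/b) * (t * kf x + (1-t) * kf y - 1/2 * t * (1-t) * (x-y)^2)
     = t*((R*D/b)*kf x) + (1-t)*((R*D/b)*kf y) - (R*D/b)/2 * t * (1-t) * (x-y)^2"
    using assms by (simp add: field_simps)
  moreover have "t * ((-R*D*a/b - D)*x + (R*D/b) * kf x) = t*((-R*D*a/b - D)*x) + t*((R*D/b)*kf x)"
    "(1-t) * ((-R*D*a/b - D)*y + (R*D/b) * kf y) = (1-t)*((-R*D*a/b - D)*y) + (1-t)*((R*D/b)*kf y)"
    by (simp_all add: algebra_simps)
  ultimately show ?thesis unfolding h_eq by (rule H)
qed

lemma norm_sq: "(norm (x - y :: real^'n))^2 = (\<Sum>i\<in>UNIV. (x$i - y$i)^2)"
  unfolding norm_vec_def L2_set_def by (simp add: sum_nonneg)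


lemma conv01: fixes x y u v :: real
  assumes "0 < x" "x < 1" "0 < y" "y < 1" "0 \<le> u" "0 \<le> v" "u + v = 1"
  shows "0 < u * x + v * y \<and> u * x + v * y < 1"
proof -
  have "u * x + v * y \<ge> u * min x y + v * min x y" using assms by (intro add_mono mult_left_mono) auto
  moreover have "u * x + v * y \<le> u * max x y + v * max x y" using assms by (intro add_mono mult_left_mono) auto
  moreover have "u * min x y + v * min x y = min x y" "u * max x y + v * max x y = max x y"
    using assms by (simp_all add: distrib_right[symmetric])
  ultimately show ?thesis using assms by auto
qed

theorem theorem5:
  fixes R :: real and D a b :: "real^'n"
  assumes "R > 0" and "\<forall>i. D$i > 0" and "\<forall>i. b$i > 0"
  shows "strongly_convex_on {q :: real^'n. \<forall>i. 0 < q$i \<and> q$i < 1} (gq R D a b)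
       \<and> strict_antimono_on {0<..} (glam R D a b)
       \<and> (\<exists>L::ereal. L > 0 \<and> ((\<lambda>lam. ereal (glam R D a b lam)) \<longlongrightarrow> L) (at_right 0))"
proof (intro conjI)
  let ?S = "{q :: real^'n. \<forall>i. 0 < q$i \<and> q$i < 1}"
  define h where "h i q = R*D$i*q*cfun (a$i) (b$i) q - D$i*q" for i q
  have gqh: "gq R D a b q = (\<Sum>i\<in>UNIV. h i (q$i))" for q unfolding gq_def h_def by simp
  define m where "m = Min (range (\<lambda>i. R*D$i/b$i))"
  have mpos: "m > 0" unfolding m_def using assms by (subst Min_gr_iff) auto
  have mle: "m \<le> R*D$i/b$i" for i unfolding m_def by (rule Min_le) auto
  show "strongly_convex_on ?S (gq R D a b)"
    unfolding strongly_convex_on_def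
  proof (intro conjI exI[of _ m] ballI mpos)
    show "convex ?S" unfolding convex_def using conv01 by auto
  next
    fix x y t assume x: "x \<in> ?S" and y: "y \<in> ?S" and t: "t \<in> {0..1::real}"
    let ?d = "\<lambda>i. (x$i - y$i)^2"
    have "gq R D a b (t *\<^sub>R x + (1 - t) *\<^sub>R y) = (\<Sum>i\<in>UNIV. h i (t*x$i + (1-t)*y$i))"
      unfolding gqh by simp
    also have "\<dots> \<le> (\<Sum>i\<in>UNIV. t * h i (x$i) + (1-t) * h i (y$i) - (R*D$i/b$i)/2 * t * (1-t) * ?d i)"
      unfolding h_def using x y t assms by (intro sum_mono h_sc) auto
    also have "\<dots> \<le> (\<Sum>i\<in>UNIV. t * h i (x$i) + (1-t) * h i (y$i) - m/2 * t * (1-t) * ?d i)"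
    proof (intro sum_mono diff_left_mono)
      fix i
      have "0 \<le> t * (1-t) * ?d i" using t by auto
      then have "m * (t * (1-t) * ?d i) \<le> (R*D$i/b$i) * (t * (1-t) * ?d i)"
        using mle[of i] by (intro mult_right_mono) auto
      moreover have e: "m/2 * t * (1-t) * ?d i = (m * (t * (1-t) * ?d i))/2"
        "(R*D$i/b$i)/2 * t * (1-t) * ?d i = ((R*D$i/b$i) * (t * (1-t) * ?d i))/2" by simp_all
      ultimately show "m/2 * t * (1-t) * ?d i \<le> (R*D$i/b$i)/2 * t * (1-t) * ?d i"
        unfolding e by (intro divide_right_mono) auto
    qed
    also have "\<dots> = t * gq R D a b x + (1-t) * gq R D a b y - m/2 * t * (1-t) * (\<Sum>i\<in>UNIV. ?d i)"
      unfolding gqh by (simp add: sum.distrib sum_subtractf sum_distrib_left)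
    also have "\<dots> = t * gq R D a b x + (1-t) * gq R D a b y - m/2 * t * (1-t) * (norm (x - y))\<^sup>2"
      unfolding norm_sq by simp
    finally show "gq R D a b (t *\<^sub>R x + (1 - t) *\<^sub>R y)
        \<le> t * gq R D a b x + (1 - t) * gq R D a b y - m / 2 * t * (1 - t) * (norm (x - y))\<^sup>2" .
  qed
next
  show "strict_antimono_on {0<..} (glam R D a b)"
    unfolding monotone_on_def
  proof (intro ballI impI)
    fix l1 l2 :: real assume l: "l1 \<in> {0<..}" "l2 \<in> {0<..}" "l1 < l2"
    show "glam R D a b l2 < glam R D a b l1"
      unfolding glam_eq[OF assms(3)] using assms l
      by (intro sum_strict_mono psi_path_mono) auto
  qed
next
  have "filterlim (glam R D a b) at_top (at_right 0)"
    unfolding glam_eq[OF assms(3)]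
    by (rule sum_at_top, rule filterlim_compose[OF psi_lim filterlim_compose[OF W_lim zz_lim]])
       (use assms in auto)
  then show "\<exists>L::ereal. L > 0 \<and> ((\<lambda>lam. ereal (glam R D a b lam)) \<longlongrightarrow> L) (at_right 0)"
    by (intro exI[of _ "\<infinity>"]) (simp add: tendsto_PInfty_eq_at_top)
qed

end
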